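(* If every geodesic on $\Sigma_\Gamma$ intersects the open ball $B(\pi(x),\rho)$, then $S^+(\ell,\rho,x)$ is $\varepsilon$-relatively dense for some real $\varepsilon>0$.
   Context: $\mathbb{D}=\{z\in\mathbb{C}:|z|<1\}$ with hyperbolic metric $d$ induced by $ds=2|dz|/(1-|z|^2)$; geodesics are parametrised with unit speed and the normal bundle of an oriented geodesic is oriented by the standard orientation of $\mathbb{D}$ and that of the geodesic. Standing setting: $\Gamma$ is a cocompact Fuchsian group with fundamental domain $\tau$ a hyperbolic polygon whose side-pairing generators are none of them their own inverse; $\Sigma_\Gamma=\Gamma\backslash\mathbb{D}$ with quotient map $\pi$ and induced metric; $\ell$ is a geodesic in $\mathbb{D}$ with unit-speed parametrisation $\kappa_\ell$ such that the image of $\{(\kappa_\ell(t),\kappa_\ell'(t))\}$ in $\operatorname{ST}(\Sigma_\Gamma)$ is a dense orbit of the geodesic flow; $x\in\tau^\circ$ and $\rho>0$. For a geodesic $k$ with unit-speed parametrisation $\kappa$: $\overline{\mathcal{N}(k,\rho)}^+$ is the union of $\{y:d(y,k)<\rho\}$ with the component of its boundary on the positive side of $k$; $p_k$ is orthogonal projection onto $k$; $S^+(k,\rho,x)=\kappa^{-1}(p_k(\Gamma(x)\cap\overline{\mathcal{N}(k,\rho)}^+))\subseteq\mathbb{R}$. A set $S\subseteq\mathbb{R}$ is $\varepsilon$-relatively dense if every $t\in\mathbb{R}$ has some $s\in S$ with $|t-s|\le\varepsilon$. *)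

theory Defs
  imports "HOL-Analysis.Analysis"
begin

definition disc :: "complex set" where
  "disc = ball 0 1"

text \<open>Distance induced by ds = 2|dz|/(1-|z|^2).\<close>
definition hdist :: "complex \<Rightarrow> complex \<Rightarrow> real" where
  "hdist z w = arcosh (1 + 2 * (cmod (z - w))^2 / ((1 - (cmod z)^2) * (1 - (cmod w)^2)))"

definition hdist_set :: "complex \<Rightarrow> complex set \<Rightarrow> real" where
  "hdist_set y A = (INF a\<in>A. hdist y a)"

text \<open>Orientation preserving isometries of the disc, acting on the disc and
  extended by the identity outside the disc (so that composition of functions is
  composition of isometries).\<close>
definition disc_isom :: "(complex \<Rightarrow> complex) \<Rightarrow> bool" where
  "disc_isom f \<longleftrightarrow>
     (\<exists>a b. (cmod a)^2 - (cmod b)^2 = 1 \<and>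
        (\<forall>z\<in>disc. f z = (a * z + b) / (cnj b * z + cnj a))) \<and>
     (\<forall>z. z \<notin> disc \<longrightarrow> f z = z)"

text \<open>Fuchsian group: discrete subgroup (equivalently, acting properly discontinuously).\<close>
definition fuchsian_group :: "(complex \<Rightarrow> complex) set \<Rightarrow> bool" where
  "fuchsian_group G \<longleftrightarrow>
     (\<forall>g\<in>G. disc_isom g) \<and> id \<in> G \<and> (\<forall>g\<in>G. \<forall>h\<in>G. g \<circ> h \<in> G) \<and>
     (\<forall>g\<in>G. inv g \<in> G) \<and>
     (\<forall>K. compact K \<and> K \<subseteq> disc \<longrightarrow> finite {g\<in>G. g ` K \<inter> K \<noteq> {}})"

definition cocompact_fuchsian :: "(complex \<Rightarrow> complex) set \<Rightarrow> bool" where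
  "cocompact_fuchsian G \<longleftrightarrow> fuchsian_group G \<and>
     (\<exists>K. compact K \<and> K \<subseteq> disc \<and> (\<Union>g\<in>G. g ` K) = disc)"

definition gorbit :: "(complex \<Rightarrow> complex) set \<Rightarrow> complex \<Rightarrow> complex set" where
  "gorbit G x = (\<lambda>g. g x) ` G"

definition hsegment :: "complex \<Rightarrow> complex \<Rightarrow> complex set" where
  "hsegment a b = {z\<in>disc. hdist a z + hdist z b = hdist a b}"

definition hconvex :: "complex set \<Rightarrow> bool" where
  "hconvex S \<longleftrightarrow> S \<subseteq> disc \<and> (\<forall>a\<in>S. \<forall>b\<in>S. hsegment a b \<subseteq> S)"

definition hyp_polygon :: "complex set \<Rightarrow> bool" where
  "hyp_polygon P \<longleftrightarrow> (\<exists>V. finite V \<and> V \<subseteq> disc \<and> P = hconvex hull V) \<and> interior P \<noteq> {}"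

definition fundamental_polygon :: "(complex \<Rightarrow> complex) set \<Rightarrow> complex set \<Rightarrow> bool" where
  "fundamental_polygon G P \<longleftrightarrow> hyp_polygon P \<and> (\<Union>g\<in>G. g ` P) = disc \<and>
     (\<forall>g\<in>G. g \<noteq> id \<longrightarrow> interior P \<inter> g ` (interior P) = {})"

text \<open>Side-pairing generators are the g \<noteq> id with P \<inter> g P a (non-degenerate) side;
  none of them is its own inverse.\<close>
definition side_pairings_not_self_inverse :: "(complex \<Rightarrow> complex) set \<Rightarrow> complex set \<Rightarrow> bool" where
  "side_pairings_not_self_inverse G P \<longleftrightarrow>
     (\<forall>g\<in>G. g \<noteq> id \<and> infinite (P \<inter> g ` P) \<longrightarrow> g \<circ> g \<noteq> id)"

definition geodesic_line :: "(real \<Rightarrow> complex) \<Rightarrow> bool" where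
  "geodesic_line \<kappa> \<longleftrightarrow> range \<kappa> \<subseteq> disc \<and> (\<forall>s t. hdist (\<kappa> s) (\<kappa> t) = \<bar>s - t\<bar>)"

text \<open>The image of the orbit of (kappa t, kappa' t) is dense in ST(Sigma): its
  Gamma-saturation is dense in the unit tangent bundle of the disc.\<close>
definition dense_geodesic :: "(complex \<Rightarrow> complex) set \<Rightarrow> (real \<Rightarrow> complex) \<Rightarrow> bool" where
  "dense_geodesic G \<kappa> \<longleftrightarrow>
     (\<forall>y v e. y \<in> disc \<and> cmod v = (1 - (cmod y)^2) / 2 \<and> e > 0 \<longrightarrow>
        (\<exists>t. \<exists>g\<in>G. cmod (g (\<kappa> t) - y) < e \<and>
              cmod (vector_derivative (g \<circ> \<kappa>) (at t) - v) < e))"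

text \<open>Positive side: reached by a geodesic leaving the line perpendicularly with
  normal i * kappa'(s), i.e. (tangent, normal) positively oriented.\<close>
definition pos_side :: "(real \<Rightarrow> complex) \<Rightarrow> complex \<Rightarrow> bool" where
  "pos_side \<kappa> y \<longleftrightarrow>
     (\<exists>s r \<gamma>. r > 0 \<and> geodesic_line \<gamma> \<and> \<gamma> 0 = \<kappa> s \<and>
        vector_derivative \<gamma> (at 0) = \<i> * vector_derivative \<kappa> (at s) \<and> \<gamma> r = y)"

definition nbhd_plus :: "(real \<Rightarrow> complex) \<Rightarrow> real \<Rightarrow> complex set" where
  "nbhd_plus \<kappa> \<rho> =
     {y\<in>disc. hdist_set y (range \<kappa>) < \<rho>} \<union>
     {y\<in>disc. hdist_set y (range \<kappa>) = \<rho> \<and> pos_side \<kappa> y}"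

definition geod_proj :: "(real \<Rightarrow> complex) \<Rightarrow> complex \<Rightarrow> complex" where
  "geod_proj \<kappa> y = (THE p. p \<in> range \<kappa> \<and> (\<forall>q\<in>range \<kappa>. hdist y p \<le> hdist y q))"

definition S_plus :: "(complex \<Rightarrow> complex) set \<Rightarrow> (real \<Rightarrow> complex) \<Rightarrow> real \<Rightarrow> complex \<Rightarrow> real set" where
  "S_plus G \<kappa> \<rho> x = \<kappa> -` (geod_proj \<kappa> ` (gorbit G x \<inter> nbhd_plus \<kappa> \<rho>))"

definition rel_dense :: "real \<Rightarrow> real set \<Rightarrow> bool" where
  "rel_dense \<epsilon> S \<longleftrightarrow> (\<forall>t. \<exists>s\<in>S. \<bar>t - s\<bar> \<le> \<epsilon>)"

end

theory Submission
  imports Defs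
begin


lemma mob_norm:
  fixes a b z :: complex
  shows "(cmod (cnj b * z + cnj a))^2 - (cmod (a*z+b))^2 = ((cmod a)^2 - (cmod b)^2) * (1 - (cmod z)^2)"
  unfolding cmod_power2 by (simp add: algebra_simps power2_eq_square)

lemma mob_diff:
  fixes a b z w :: complex
  assumes "cnj b * z + cnj a \<noteq> 0" "cnj b * w + cnj a \<noteq> 0"
  shows "(a*z+b)/(cnj b * z + cnj a) - (a*w+b)/(cnj b * w + cnj a)
     = (of_real ((cmod a)^2 - (cmod b)^2)) * (z - w) / ((cnj b * z + cnj a) * (cnj b * w + cnj a))"
proof -
  have e: "of_real ((cmod a)^2 - (cmod b)^2) = a * cnj a - b * cnj b"
    by (simp only: of_real_diff complex_norm_square)
  show ?thesis using assms unfolding e by (simp add: field_simps)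
qed

definition hdq :: "complex \<Rightarrow> complex \<Rightarrow> real" where
  "hdq z w = (cmod (z-w))^2/((1-(cmod z)^2)*(1-(cmod w)^2))"

definition mob :: "complex \<Rightarrow> complex \<Rightarrow> complex \<Rightarrow> complex" where
  "mob a b z = (a*z+b)/(cnj b * z + cnj a)"

lemma disc_iff: "z \<in> disc \<longleftrightarrow> cmod z < 1"
  by (simp add: disc_def)

lemma hdist_hd: "hdist z w = arcosh (1 + 2 * hdq z w)"
  by (simp add: hdist_def hdq_def)

lemma hd_nonneg: "z \<in> disc \<Longrightarrow> w \<in> disc \<Longrightarrow> hdq z w \<ge> 0"
  unfolding hdq_def disc_iff
  by (intro divide_nonneg_pos mult_pos_pos) (auto simp: abs_square_less_1)

lemma hd_sym: "hdq z w = hdq w z"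
  by (simp add: hdq_def norm_minus_commute mult.commute)

lemma hdist_sym: "hdist z w = hdist w z"
  by (simp add: hdist_hd hd_sym)

lemma hd_self: "hdq z z = 0" by (simp add: hdq_def)

lemma hdist_self: "hdist z z = 0" by (simp add: hdist_hd hd_self)

lemma hd_eq_0: "z \<in> disc \<Longrightarrow> w \<in> disc \<Longrightarrow> hdq z w = 0 \<longleftrightarrow> z = w"
proof -
  assume "z \<in> disc" "w \<in> disc"
  hence "(cmod z)^2 < 1" "(cmod w)^2 < 1" by (auto simp: disc_iff abs_square_less_1)
  thus ?thesis unfolding hdq_def by auto
qed

lemma hdist_nonneg: "z \<in> disc \<Longrightarrow> w \<in> disc \<Longrightarrow> hdist z w \<ge> 0"
  unfolding hdist_hd using hd_nonneg[of z w] by simp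

lemma cosh_hdist: "z \<in> disc \<Longrightarrow> w \<in> disc \<Longrightarrow> cosh (hdist z w) = 1 + 2 * hdq z w"
  unfolding hdist_hd using hd_nonneg[of z w] by simp

lemma hdist_less_iff:
  assumes "z \<in> disc" "w \<in> disc" "z' \<in> disc" "w' \<in> disc"
  shows "hdist z w < hdist z' w' \<longleftrightarrow> hdq z w < hdq z' w'"
  unfolding hdist_hd using hd_nonneg[OF assms(1,2)] hd_nonneg[OF assms(3,4)] by simp

lemma hdist_le_iff:
  assumes "z \<in> disc" "w \<in> disc" "z' \<in> disc" "w' \<in> disc"
  shows "hdist z w \<le> hdist z' w' \<longleftrightarrow> hdq z w \<le> hdq z' w'"
  using hdist_less_iff[OF assms(3,4,1,2)] by linarith

lemma hdist_eq_iff: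
  assumes "z \<in> disc" "w \<in> disc" "d \<ge> 0"
  shows "hdist z w = d \<longleftrightarrow> 1 + 2 * hdq z w = cosh d"
proof
  assume "hdist z w = d" thus "1 + 2 * hdq z w = cosh d" using cosh_hdist[OF assms(1,2)] by simp
next
  assume "1 + 2 * hdq z w = cosh d" thus "hdist z w = d" using assms(3) by (simp add: hdist_hd arcosh_cosh_real)
qed

lemma hdist_le_iff_cosh:
  assumes "z \<in> disc" "w \<in> disc" "d \<ge> 0"
  shows "hdist z w \<le> d \<longleftrightarrow> 1 + 2 * hdq z w \<le> cosh d"
proof -
  have "hdist z w \<le> d \<longleftrightarrow> cosh (hdist z w) \<le> cosh d"
    using cosh_real_nonneg_le_iff[OF hdist_nonneg[OF assms(1,2)] assms(3)] by simp
  thus ?thesis using cosh_hdist[OF assms(1,2)] by simp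
qed

lemma mob_props:
  fixes a b :: complex
  assumes k: "(cmod a)^2 - (cmod b)^2 > 0" and z: "z \<in> disc"
  shows "cnj b * z + cnj a \<noteq> 0" "mob a b z \<in> disc"
    "1 - (cmod (mob a b z))^2 = ((cmod a)^2 - (cmod b)^2) * (1 - (cmod z)^2) / (cmod (cnj b * z + cnj a))^2"
proof -
  have zl: "cmod z < 1" using z disc_iff by auto
  have "cmod b < cmod a" using k by (smt (verit) norm_ge_zero power_mono)
  have "cmod (cnj b * z) \<le> cmod b" using zl by (simp add: norm_mult mult_left_le)
  hence "cmod (cnj b * z) < cmod (cnj a)" using \<open>cmod b < cmod a\<close> by simp
  hence "cnj b * z + cnj a \<noteq> 0"
    by (metis add.commute add_diff_cancel_left' diff_0 norm_minus_cancel order_less_irrefl)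
  thus d: "cnj b * z + cnj a \<noteq> 0" .
  have "1 - (cmod (mob a b z))^2 = ((cmod (cnj b * z + cnj a))^2 - (cmod (a*z+b))^2) / (cmod (cnj b * z + cnj a))^2"
    using d by (simp add: mob_def norm_divide power_divide field_simps)
  thus e: "1 - (cmod (mob a b z))^2 = ((cmod a)^2 - (cmod b)^2) * (1 - (cmod z)^2) / (cmod (cnj b * z + cnj a))^2"
    by (simp add: mob_norm)
  have "((cmod a)^2 - (cmod b)^2) * (1 - (cmod z)^2) / (cmod (cnj b * z + cnj a))^2 > 0"
    using k zl d by (intro divide_pos_pos mult_pos_pos) (auto simp: abs_square_less_1)
  hence "(cmod (mob a b z))^2 < 1" using e by simp
  thus "mob a b z \<in> disc" by (simp add: disc_iff abs_square_less_1)
qed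

lemma hd_aux:
  fixes K Dz Dw Az Aw M2 N2 :: real
  assumes "K > 0" "Dz > 0" "Dw > 0" "Az > 0" "Aw > 0" "M2 = K^2*N2/(Dz^2*Dw^2)"
  shows "M2/((K*Az/Dz^2)*(K*Aw/Dw^2)) = N2/(Az*Aw)"
  using assms by (simp add: field_simps power2_eq_square)

lemma mob_hd:
  fixes a b :: complex
  assumes k: "(cmod a)^2 - (cmod b)^2 > 0" and z: "z \<in> disc" and w: "w \<in> disc"
  shows "hdq (mob a b z) (mob a b w) = hdq z w"
proof -
  let ?k = "(cmod a)^2 - (cmod b)^2"
  note pz = mob_props[OF k z] and pw = mob_props[OF k w]
  have "cmod (mob a b z - mob a b w) = \<bar>?k\<bar> * cmod (z - w) / (cmod (cnj b * z + cnj a) * cmod (cnj b * w + cnj a))"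
    unfolding mob_def mob_diff[OF pz(1) pw(1)] by (simp only: norm_divide norm_mult norm_of_real)
  hence "(cmod (mob a b z - mob a b w))^2 = ?k^2 * (cmod (z - w))^2 / ((cmod (cnj b * z + cnj a))^2 * (cmod (cnj b * w + cnj a))^2)"
    by (simp add: power_divide power_mult_distrib)
  moreover have "1 - (cmod z)^2 > 0" "1 - (cmod w)^2 > 0" using z w by (auto simp: disc_iff abs_square_less_1)
  ultimately show ?thesis unfolding hdq_def pz(3) pw(3) using pz(1) pw(1) k
    by (intro hd_aux) auto
qed

lemma mob_hdist:
  fixes a b :: complex
  assumes k: "(cmod a)^2 - (cmod b)^2 > 0" and z: "z \<in> disc" and w: "w \<in> disc"
  shows "hdist (mob a b z) (mob a b w) = hdist z w"
  by (simp add: hdist_hd mob_hd[OF assms])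




lemma hd0: "hdq 0 p = (cmod p)^2 / (1 - (cmod p)^2)" by (simp add: hdq_def)
lemma hd0': "hdq p 0 = (cmod p)^2 / (1 - (cmod p)^2)" by (simp add: hdq_def)

lemma cosh_sinh_hdist0:
  assumes "p \<in> disc"
  shows "cosh (hdist p 0) = (1 + (cmod p)^2)/(1 - (cmod p)^2)"
        "sinh (hdist p 0) = 2 * cmod p/(1 - (cmod p)^2)"
proof -
  have r: "(cmod p)^2 < 1" using assms by (simp add: disc_iff abs_square_less_1)
  have z: "(0::complex) \<in> disc" by (simp add: disc_iff)
  have "1 + 2 * ((cmod p)^2 / (1 - (cmod p)^2)) = (1 + (cmod p)^2)/(1 - (cmod p)^2)"
    using r by (simp add: field_simps)
  thus c: "cosh (hdist p 0) = (1 + (cmod p)^2)/(1 - (cmod p)^2)"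
    using cosh_hdist[OF assms z] by (simp add: hd0')
  have s0: "sinh (hdist p 0) \<ge> 0" using hdist_nonneg[OF assms z] by simp
  have "(sinh (hdist p 0))^2 = (cosh (hdist p 0))^2 - 1" by (simp add: cosh_square_eq)
  also have "\<dots> = (2 * cmod p/(1 - (cmod p)^2))^2" unfolding c using r
    by (simp add: divide_simps) (simp add: algebra_simps power2_eq_square)
  finally show "sinh (hdist p 0) = 2 * cmod p/(1 - (cmod p)^2)"
    using s0 r by (subst (asm) power2_eq_iff_nonneg) auto
qed

lemma tri0_identity:
  assumes p: "p \<in> disc" and q: "q \<in> disc"
  shows "cosh (hdist p 0 + hdist 0 q) = 1 + 2 * hdq p q + 2 * ((cmod p + cmod q)^2 - (cmod (p - q))^2) / ((1 - (cmod p)^2) * (1 - (cmod q)^2))"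
proof -
  have r: "(cmod p)^2 < 1" "(cmod q)^2 < 1" using p q by (auto simp add: disc_iff abs_square_less_1)
  have "cosh (hdist p 0 + hdist 0 q) = cosh (hdist p 0) * cosh (hdist q 0) + sinh (hdist p 0) * sinh (hdist q 0)"
    by (simp add: cosh_add hdist_sym[of 0 q])
  also have "\<dots> = 1 + 2 * hdq p q + 2 * ((cmod p + cmod q)^2 - (cmod (p - q))^2) / ((1 - (cmod p)^2) * (1 - (cmod q)^2))"
    unfolding cosh_sinh_hdist0[OF p] cosh_sinh_hdist0[OF q] hdq_def using r
    by (simp add: divide_simps) (simp add: algebra_simps power2_eq_square)
  finally show ?thesis .
qed

lemma hdist_tri0:
  assumes p: "p \<in> disc" and q: "q \<in> disc"
  shows "hdist p q \<le> hdist p 0 + hdist 0 q"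
proof -
  have z: "(0::complex) \<in> disc" by (simp add: disc_iff)
  have r: "(cmod p)^2 < 1" "(cmod q)^2 < 1" using p q by (auto simp add: disc_iff abs_square_less_1)
  have "cmod (p - q) \<le> cmod p + cmod q" by (rule norm_triangle_ineq4)
  hence "(cmod (p - q))^2 \<le> (cmod p + cmod q)^2" by (simp add: power_mono)
  hence "0 \<le> 2 * ((cmod p + cmod q)^2 - (cmod (p - q))^2) / ((1 - (cmod p)^2) * (1 - (cmod q)^2))"
    using r by (intro divide_nonneg_pos mult_pos_pos) auto
  thus ?thesis
    using tri0_identity[OF p q] hdist_nonneg[OF p z] hdist_nonneg[OF z q]
    by (subst hdist_le_iff_cosh[OF p q]) auto
qed

lemma hdist_tri0_eq:
  assumes p: "p \<in> disc" and q: "q \<in> disc" and e: "hdist p q = hdist p 0 + hdist 0 q"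
  shows "cmod (p - q) = cmod p + cmod q"
proof -
  have z: "(0::complex) \<in> disc" by (simp add: disc_iff)
  have r: "(cmod p)^2 < 1" "(cmod q)^2 < 1" using p q by (auto simp add: disc_iff abs_square_less_1)
  have "cosh (hdist p q) = 1 + 2 * hdq p q" by (rule cosh_hdist[OF p q])
  hence "2 * ((cmod p + cmod q)^2 - (cmod (p - q))^2) / ((1 - (cmod p)^2) * (1 - (cmod q)^2)) = 0"
    using tri0_identity[OF p q] e by simp
  hence "(cmod (p - q))^2 = (cmod p + cmod q)^2" using r by simp
  thus ?thesis by (simp add: power2_eq_iff_nonneg)
qed

lemma mob_shift0:
  assumes "y \<in> disc"
  shows "(cmod 1)^2 - (cmod (-y))^2 > 0" "mob 1 (-y) y = 0"
  using assms by (auto simp: disc_iff mob_def abs_square_less_1)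

lemma hdist_tri:
  assumes p: "p \<in> disc" and q: "q \<in> disc" and y: "y \<in> disc"
  shows "hdist p q \<le> hdist p y + hdist y q"
proof -
  note k = mob_shift0(1)[OF y]
  have "hdist p q = hdist (mob 1 (-y) p) (mob 1 (-y) q)" by (simp add: mob_hdist[OF k p q])
  also have "\<dots> \<le> hdist (mob 1 (-y) p) 0 + hdist 0 (mob 1 (-y) q)"
    by (intro hdist_tri0 mob_props(2)[OF k] p q)
  also have "\<dots> = hdist p y + hdist y q"
    using mob_hdist[OF k p y] mob_hdist[OF k y q] mob_shift0(2)[OF y] by simp
  finally show ?thesis .
qed

lemma tanh_hd_real:
  fixes a b :: real
  shows "(tanh a - tanh b)^2/((1-(tanh a)^2)*(1-(tanh b)^2)) = (sinh (a-b))^2"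
proof -
  have ca: "cosh a > 0" and cb: "cosh b > 0" by simp_all
  have ea: "(cosh a)^2 = (sinh a)^2 + 1" and eb: "(cosh b)^2 = (sinh b)^2 + 1" by (simp_all add: cosh_square_eq)
  have "1-(tanh a)^2 = ((cosh a)^2 - (sinh a)^2)/(cosh a)^2" using ca by (simp add: tanh_def field_simps)
  hence 1: "1-(tanh a)^2 = 1/(cosh a)^2" using ea by simp
  have "1-(tanh b)^2 = ((cosh b)^2 - (sinh b)^2)/(cosh b)^2" using cb by (simp add: tanh_def field_simps)
  hence 2: "1-(tanh b)^2 = 1/(cosh b)^2" using eb by simp
  show ?thesis unfolding 1 2 sinh_diff using ca cb
    by (simp add: tanh_def field_simps power2_eq_square)
qed

definition lin :: "complex \<Rightarrow> real \<Rightarrow> complex" where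
  "lin u t = of_real (tanh (t/2)) * u"

lemma lin_norm: "cmod u = 1 \<Longrightarrow> cmod (lin u t) = \<bar>tanh (t/2)\<bar>"
  by (simp add: lin_def norm_mult)

lemma lin_disc: "cmod u = 1 \<Longrightarrow> lin u t \<in> disc"
  using tanh_real_bounds[of "t/2"] by (simp add: lin_norm disc_iff abs_less_iff)

lemma lin_hd: "cmod u = 1 \<Longrightarrow> hdq (lin u s) (lin u t) = (cosh (s - t) - 1)/2"
proof -
  assume u: "cmod u = 1"
  have "lin u s - lin u t = of_real (tanh (s/2) - tanh (t/2)) * u" by (simp add: lin_def algebra_simps)
  hence "cmod (lin u s - lin u t) = \<bar>tanh (s/2) - tanh (t/2)\<bar>" using u by (simp only: norm_mult norm_of_real) simp
  hence "(cmod (lin u s - lin u t))^2 = (tanh (s/2) - tanh (t/2))^2" by (simp add: power2_abs)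
  hence "hdq (lin u s) (lin u t) = (sinh (s/2 - t/2))^2"
    unfolding hdq_def lin_norm[OF u] tanh_hd_real[symmetric] by (simp add: power2_abs)
  also have "\<dots> = (cosh (s - t) - 1)/2"
  proof -
    define v where "v = s/2 - t/2"
    have "s - t = 2 * v" by (simp add: v_def)
    hence "cosh (s - t) = cosh (2 * v)" by simp
    thus ?thesis using cosh_double[of v] cosh_square_eq[of v] unfolding v_def[symmetric] by simp
  qed
  finally show ?thesis .
qed

lemma lin_hdist: "cmod u = 1 \<Longrightarrow> hdist (lin u s) (lin u t) = \<bar>s - t\<bar>"
proof -
  assume u: "cmod u = 1"
  have "cosh \<bar>s - t\<bar> = cosh (s - t)" by simp
  thus ?thesis by (subst hdist_eq_iff) (auto simp: lin_disc[OF u] lin_hd[OF u] diff_divide_distrib)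
qed




lemma mob_k: "c \<in> disc \<Longrightarrow> (cmod 1)^2 - (cmod c)^2 > 0"
  by (simp add: disc_iff abs_square_less_1)

lemma mob1: "mob 1 c z = (z + c) / (cnj c * z + 1)" by (simp add: mob_def)

lemma mob_inv:
  assumes c: "c \<in> disc" and z: "z \<in> disc"
  shows "mob 1 c (mob 1 (-c) z) = z"
proof -
  have k: "(cmod 1)^2 - (cmod (-c))^2 > 0" using mob_k[OF c] by simp
  have d: "cnj (-c) * z + cnj 1 \<noteq> 0" by (rule mob_props(1)[OF k z])
  hence d': "1 - cnj c * z \<noteq> 0" by simp
  have cc: "cnj c * c \<noteq> 1"
  proof
    assume "cnj c * c = 1"
    hence "(cmod c)^2 = 1" by (metis complex_norm_square mult.commute of_real_eq_1_iff)
    thus False using c unfolding disc_iff by (metis abs_norm_cancel abs_square_less_1 less_irrefl)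
  qed
  have m: "mob 1 (-c) z = (z - c)/(1 - cnj c * z)" by (simp add: mob_def)
  have n: "(z - c)/(1 - cnj c * z) + c = z*(1 - cnj c*c)/(1 - cnj c * z)"
    using d' by (simp add: field_simps)
  have dd: "cnj c * ((z - c)/(1 - cnj c * z)) + 1 = (1 - cnj c*c)/(1 - cnj c * z)"
    using d' by (simp add: field_simps)
  have cc': "1 - cnj c * c \<noteq> 0" using cc by simp
  have "mob 1 c (mob 1 (-c) z) = ((z - c)/(1 - cnj c * z) + c) / (cnj c * ((z - c)/(1 - cnj c * z)) + 1)"
    by (subst m) (simp only: mob1)
  also have "\<dots> = (z*(1 - cnj c*c)/(1 - cnj c * z)) / ((1 - cnj c*c)/(1 - cnj c * z))" by (simp only: n dd)
  also have "\<dots> = z" using d' cc' by simp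
  finally show ?thesis .
qed

lemma lin0: "lin u 0 = 0" by (simp add: lin_def)

lemma geo_lin:
  assumes c: "c \<in> disc" and u: "cmod u = 1"
  shows "geodesic_line (\<lambda>t. mob 1 c (lin u t))"
  unfolding geodesic_line_def
  using mob_props(2)[OF mob_k[OF c] lin_disc[OF u]] mob_hdist[OF mob_k[OF c] lin_disc[OF u] lin_disc[OF u]]
     lin_hdist[OF u] by auto

lemma hd_from_hdist: "z \<in> disc \<Longrightarrow> w \<in> disc \<Longrightarrow> hdq z w = (cosh (hdist z w) - 1)/2"
  using cosh_hdist by simp

lemma vec_lemma:
  fixes p q :: complex and \<alpha> \<beta> :: real
  assumes h1: "(cmod q)^2 = \<beta>^2" and h2: "(cmod p)^2 = \<alpha>^2" and h3: "(cmod (q-p))^2 = (\<beta>-\<alpha>)^2"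
    and a: "\<alpha> \<noteq> 0"
  shows "q = of_real (\<beta>/\<alpha>) * p"
proof -
  obtain q1 q2 where q: "q = Complex q1 q2" by (cases q)
  obtain p1 p2 where p: "p = Complex p1 p2" by (cases p)
  have H1: "q1^2 + q2^2 = \<beta>^2" using h1 q by (simp add: cmod_power2)
  have H2: "p1^2 + p2^2 = \<alpha>^2" using h2 p by (simp add: cmod_power2)
  have H3: "(q1-p1)^2 + (q2-p2)^2 = (\<beta>-\<alpha>)^2" using h3 p q by (simp add: cmod_power2)
  have S: "q1*p1 + q2*p2 = \<alpha>*\<beta>" using H1 H2 H3 by (simp add: power2_eq_square algebra_simps)
  have "(\<alpha>*q1 - \<beta>*p1)^2 + (\<alpha>*q2 - \<beta>*p2)^2 = \<alpha>^2*(q1^2+q2^2) + \<beta>^2*(p1^2+p2^2) - 2*\<alpha>*\<beta>*(q1*p1 + q2*p2)"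
    by (simp add: power2_eq_square algebra_simps)
  also have "\<dots> = 0" unfolding H1 H2 S by (simp add: power2_eq_square)
  finally have "(\<alpha>*q1 - \<beta>*p1)^2 + (\<alpha>*q2 - \<beta>*p2)^2 = 0" .
  hence "\<alpha>*q1 - \<beta>*p1 = 0" "\<alpha>*q2 - \<beta>*p2 = 0" by (simp_all add: sum_power2_eq_zero_iff)
  hence "q1 = \<beta>/\<alpha>*p1" "q2 = \<beta>/\<alpha>*p2" using a by (simp_all add: field_simps)
  thus ?thesis using p q by (simp add: complex_eq_iff)
qed

lemma geodesic_through0:
  assumes g: "geodesic_line \<gamma>" and g0: "\<gamma> 0 = 0"
  shows "\<exists>u. cmod u = 1 \<and> (\<forall>t. \<gamma> t = lin u t)"
proof -
  have gd: "\<And>t. \<gamma> t \<in> disc" using g unfolding geodesic_line_def by auto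
  have gh: "\<And>s t. hdist (\<gamma> s) (\<gamma> t) = \<bar>s - t\<bar>" using g unfolding geodesic_line_def by auto
  have z: "(0::complex) \<in> disc" by (simp add: disc_iff)
  have one: "cmod (1::complex) = 1" by simp
  have nrm: "(cmod (\<gamma> t))^2 = (tanh (t/2))^2" for t
  proof -
    have "hdist 0 (\<gamma> t) = hdist 0 (lin 1 t)"
      using gh[of 0 t] g0 lin_hdist[OF one, of 0 t] by (simp add: lin0)
    hence "hdq 0 (\<gamma> t) = hdq 0 (lin 1 t)" using hd_from_hdist[OF z gd[of t]] hd_from_hdist[OF z lin_disc[OF one, of t]] by simp
    hence e: "(cmod (\<gamma> t))^2 / (1 - (cmod (\<gamma> t))^2) = (tanh (t/2))^2 / (1 - (tanh (t/2))^2)"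
      by (simp add: hd0 lin_norm[OF one] power2_abs)
    have "(cmod (\<gamma> t))^2 < 1" using gd[of t] by (simp add: disc_iff abs_square_less_1)
    moreover have "(tanh (t/2))^2 < 1" using tanh_real_bounds[of "t/2"] by (simp add: abs_square_less_1 abs_less_iff)
    ultimately show ?thesis using e by (simp add: field_simps)
  qed
  define \<alpha> :: real where "\<alpha> = tanh (1/2)"
  have ap: "\<alpha> > 0" by (simp add: \<alpha>_def)
  define u where "u = \<gamma> 1 / of_real \<alpha>"
  have n1: "cmod (\<gamma> 1) = \<alpha>" using nrm[of 1] ap by (simp add: \<alpha>_def power2_eq_iff_nonneg)
  have u: "cmod u = 1" using n1 ap by (simp add: u_def norm_divide)
  have "\<gamma> t = lin u t" for t
  proof -
    define \<beta> :: real where "\<beta> = tanh (t/2)"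
    have "hdist (\<gamma> t) (\<gamma> 1) = hdist (lin u t) (lin u 1)" using gh lin_hdist[OF u] by simp
    hence "hdq (\<gamma> t) (\<gamma> 1) = hdq (lin u t) (lin u 1)"
      using hd_from_hdist[OF gd[of t] gd[of 1]] hd_from_hdist[OF lin_disc[OF u, of t] lin_disc[OF u, of 1]] by simp
    moreover have "(cmod (lin u t))^2 = (cmod (\<gamma> t))^2" "(cmod (lin u 1))^2 = (cmod (\<gamma> 1))^2"
      using nrm[of t] nrm[of 1] by (simp_all add: lin_norm[OF u] power2_abs)
    moreover have "(cmod (\<gamma> t))^2 < 1" "(cmod (\<gamma> 1))^2 < 1" using gd by (simp_all add: disc_iff abs_square_less_1)
    hence D: "(1 - (cmod (\<gamma> t))^2) * (1 - (cmod (\<gamma> 1))^2) \<noteq> 0" by simp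
    ultimately have "(cmod (\<gamma> t - \<gamma> 1))^2 / ((1 - (cmod (\<gamma> t))^2) * (1 - (cmod (\<gamma> 1))^2))
        = (cmod (lin u t - lin u 1))^2 / ((1 - (cmod (\<gamma> t))^2) * (1 - (cmod (\<gamma> 1))^2))"
      unfolding hdq_def by simp
    hence N: "(cmod (\<gamma> t - \<gamma> 1))^2 = (cmod (lin u t - lin u 1))^2"
      using D by simp
    have "lin u t - lin u 1 = of_real (\<beta> - \<alpha>) * u" by (simp add: lin_def \<alpha>_def \<beta>_def algebra_simps)
    hence "cmod (lin u t - lin u 1) = \<bar>\<beta> - \<alpha>\<bar>" using u by (simp only: norm_mult norm_of_real) simp
    hence h3: "(cmod (\<gamma> t - \<gamma> 1))^2 = (\<beta> - \<alpha>)^2" using N by (simp add: power2_abs)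
    have "\<gamma> t = of_real (\<beta>/\<alpha>) * \<gamma> 1"
      by (rule vec_lemma[OF _ _ h3]) (use nrm[of t] nrm[of 1] ap in \<open>auto simp: \<alpha>_def \<beta>_def\<close>)
    thus ?thesis using ap by (simp add: lin_def u_def \<beta>_def)
  qed
  thus ?thesis using u by auto
qed

lemma geodesic_char:
  assumes g: "geodesic_line \<gamma>"
  shows "\<exists>u. cmod u = 1 \<and> (\<forall>t. \<gamma> t = mob 1 (\<gamma> 0) (lin u t))"
proof -
  have gd: "\<And>t. \<gamma> t \<in> disc" using g unfolding geodesic_line_def by auto
  note k = mob_shift0(1)[OF gd[of 0]]
  define \<gamma>' where "\<gamma>' t = mob 1 (-(\<gamma> 0)) (\<gamma> t)" for t
  have r: "range \<gamma>' \<subseteq> disc" using mob_props(2)[OF k gd] by (auto simp: \<gamma>'_def)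
  have "hdist (\<gamma>' s) (\<gamma>' t) = \<bar>s - t\<bar>" for s t
    using mob_hdist[OF k gd[of s] gd[of t]] g unfolding \<gamma>'_def geodesic_line_def by simp
  hence g': "geodesic_line \<gamma>'" using r unfolding geodesic_line_def by blast
  have "\<gamma>' 0 = 0" unfolding \<gamma>'_def by (rule mob_shift0(2)[OF gd[of 0]])
  from geodesic_through0[OF g' this] obtain u where u: "cmod u = 1" "\<And>t. \<gamma>' t = lin u t" by blast
  have "\<gamma> t = mob 1 (\<gamma> 0) (lin u t)" for t
  proof -
    have "\<gamma> t = mob 1 (\<gamma> 0) (\<gamma>' t)" unfolding \<gamma>'_def by (rule mob_inv[OF gd[of 0] gd[of t], symmetric])
    thus ?thesis by (simp only: u(2))
  qed
  thus ?thesis using u(1) by blast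
qed




lemma disc_sq: "z \<in> disc \<Longrightarrow> (cmod z)^2 < 1"
  unfolding disc_iff by (metis abs_norm_cancel abs_square_less_1)

lemma disc_sq': "cmod z < 1 \<Longrightarrow> (cmod z)^2 < 1"
  by (metis abs_norm_cancel abs_square_less_1)

lemma cont_mob1:
  assumes "continuous_on S f" "continuous_on S g" "\<And>x. x \<in> S \<Longrightarrow> f x \<in> disc \<and> g x \<in> disc"
  shows "continuous_on S (\<lambda>x. mob 1 (f x) (g x))"
proof -
  have "cnj (f x) * g x + 1 \<noteq> 0" if x: "x \<in> S" for x
    using mob_props(1)[OF mob_k[of "f x"], of "g x"] assms(3)[OF x] by simp
  thus ?thesis unfolding mob1 using assms(1,2)
    by (intro continuous_intros) auto
qed

lemma cont_hdist:
  assumes "continuous_on S f" "continuous_on S g" "\<And>x. x \<in> S \<Longrightarrow> f x \<in> disc \<and> g x \<in> disc"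
  shows "continuous_on S (\<lambda>x. hdist (f x) (g x))"
proof -
  have d: "\<And>x. x \<in> S \<Longrightarrow> (1 - (cmod (f x))^2) * (1 - (cmod (g x))^2) \<noteq> 0"
  proof -
    fix x assume x: "x \<in> S"
    have "(cmod (f x))^2 < 1" "(cmod (g x))^2 < 1" using disc_sq assms(3)[OF x] by auto
    thus "(1 - (cmod (f x))^2) * (1 - (cmod (g x))^2) \<noteq> 0" by simp
  qed
  have c: "continuous_on S (\<lambda>x. 1 + 2 * hdq (f x) (g x))" unfolding hdq_def
    using assms(1,2) d by (intro continuous_intros) auto
  have "(\<lambda>x. 1 + 2 * hdq (f x) (g x)) ` S \<subseteq> {1..}"
  proof
    fix z assume "z \<in> (\<lambda>x. 1 + 2 * hdq (f x) (g x)) ` S"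
    then obtain x where x: "x \<in> S" "z = 1 + 2 * hdq (f x) (g x)" by blast
    thus "z \<in> {1..}" using hd_nonneg[of "f x" "g x"] assms(3)[OF x(1)] by simp
  qed
  thus ?thesis unfolding hdist_hd
    by (rule continuous_on_compose2[OF continuous_on_arcosh[OF order.refl] c])
qed

lemma cont_lin_t: "continuous_on UNIV (\<lambda>t. lin u t)"
  unfolding lin_def by (intro continuous_intros) auto

lemma geodesic_continuous:
  assumes g: "geodesic_line \<gamma>"
  shows "continuous_on UNIV \<gamma>"
proof -
  have gd: "\<And>t. \<gamma> t \<in> disc" using g unfolding geodesic_line_def by auto
  obtain u where u: "cmod u = 1" "\<And>t. \<gamma> t = mob 1 (\<gamma> 0) (lin u t)" using geodesic_char[OF g] by blast
  define c where "c = \<gamma> 0"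
  have cd: "c \<in> disc" by (simp add: c_def gd)
  have "continuous_on UNIV (\<lambda>t. mob 1 c (lin u t))"
    by (rule cont_mob1[OF continuous_on_const cont_lin_t]) (simp add: cd lin_disc[OF u(1)])
  moreover have "\<gamma> = (\<lambda>t. mob 1 c (lin u t))" unfolding c_def by (rule ext) (rule u(2))
  ultimately show ?thesis by simp
qed

lemma uniform_T:
  fixes G :: "(complex \<Rightarrow> complex) set"
  assumes K: "compact K" "K \<subseteq> disc"
    and hyp: "\<forall>\<gamma>. geodesic_line \<gamma> \<longrightarrow> (\<exists>t. \<exists>g\<in>G. hdist (\<gamma> t) (g x) < \<rho>)"
    and Gx: "\<forall>g\<in>G. g x \<in> disc"
  shows "\<exists>T. \<forall>c\<in>K. \<forall>u. cmod u = 1 \<longrightarrow> (\<exists>t. \<bar>t\<bar> \<le> T \<and> (\<exists>g\<in>G. hdist (mob 1 c (lin u t)) (g x) < \<rho>))"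
proof -
  define U where "U = (\<lambda>(t::real, g::complex\<Rightarrow>complex).
     {p::complex\<times>complex. cmod (fst p) < 1 \<and> cmod (lin (snd p) t) < 1 \<and> hdist (mob 1 (fst p) (lin (snd p) t)) (g x) < \<rho>})"
  have opn: "open (U tg)" if tg: "tg \<in> UNIV \<times> G" for tg
  proof -
    obtain t g where tg': "tg = (t, g)" "g \<in> G" using tg by auto
    define A where "A = {p::complex\<times>complex. cmod (fst p) < 1 \<and> cmod (lin (snd p) t) < 1}"
    have oA: "open A" unfolding A_def lin_def
      by (intro open_Collect_conj open_Collect_less continuous_intros)
    have cF: "continuous_on A (\<lambda>p. hdist (mob 1 (fst p) (lin (snd p) t)) (g x))"
    proof (rule cont_hdist)
      have c1: "continuous_on A (\<lambda>p. fst p)" by (intro continuous_intros)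
      have c2: "continuous_on A (\<lambda>p. lin (snd p) t)" unfolding lin_def by (intro continuous_intros)
      show "continuous_on A (\<lambda>p. mob 1 (fst p) (lin (snd p) t))"
        by (rule cont_mob1[OF c1 c2]) (simp add: A_def disc_iff)
      show "continuous_on A (\<lambda>p. g x)" by (rule continuous_on_const)
      fix p assume "p \<in> A"
      hence h: "fst p \<in> disc" "lin (snd p) t \<in> disc" by (simp_all add: A_def disc_iff)
      show "mob 1 (fst p) (lin (snd p) t) \<in> disc \<and> g x \<in> disc"
        using Gx tg'(2) mob_props(2)[OF mob_k[OF h(1)] h(2)] by blast
    qed
    have "open ((\<lambda>p. hdist (mob 1 (fst p) (lin (snd p) t)) (g x)) -` {..<\<rho>} \<inter> A)"
      using continuous_on_open_vimage[OF oA, THEN iffD1, OF cF, rule_format, of "{..<\<rho>}"] by simp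
    moreover have "U tg = (\<lambda>p. hdist (mob 1 (fst p) (lin (snd p) t)) (g x)) -` {..<\<rho>} \<inter> A"
      unfolding U_def A_def tg'(1) by auto
    ultimately show ?thesis by simp
  qed
  have cov: "K \<times> sphere 0 1 \<subseteq> (\<Union>tg\<in>UNIV \<times> G. U tg)"
  proof
    fix p :: "complex \<times> complex" assume p: "p \<in> K \<times> sphere 0 1"
    obtain c u where cu: "p = (c, u)" "c \<in> K" "cmod u = 1" using p by auto
    have c: "c \<in> disc" using cu K by auto
    from hyp[rule_format, OF geo_lin[OF c cu(3)]]
    obtain t g where tg: "g \<in> G" "hdist (mob 1 c (lin u t)) (g x) < \<rho>" by blast
    have "p \<in> U (t, g)" using cu c tg lin_disc[OF cu(3)] by (auto simp: U_def disc_iff)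
    thus "p \<in> (\<Union>tg\<in>UNIV \<times> G. U tg)" using tg(1) by blast
  qed
  have cpt: "compact (K \<times> sphere (0::complex) 1)" using K(1) by (intro compact_Times compact_sphere)
  obtain C' where C': "C' \<subseteq> UNIV \<times> G" "finite C'" "K \<times> sphere 0 1 \<subseteq> (\<Union>tg\<in>C'. U tg)"
    using compactE_image[OF cpt opn cov] by blast
  define T where "T = (\<Sum>tg\<in>C'. \<bar>fst tg\<bar>)"
  have "\<exists>t. \<bar>t\<bar> \<le> T \<and> (\<exists>g\<in>G. hdist (mob 1 c (lin u t)) (g x) < \<rho>)" if c: "c \<in> K" and u: "cmod u = 1" for c u
  proof -
    have "(c, u) \<in> K \<times> sphere 0 1" using c u by auto
    then obtain tg where tg: "tg \<in> C'" "(c, u) \<in> U tg" using C'(3) by blast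
    obtain t g where tg': "tg = (t, g)" by (cases tg)
    have g: "g \<in> G" using C'(1) tg(1) tg' by auto
    have "\<bar>t\<bar> \<le> T" unfolding T_def using member_le_sum[of tg C' "\<lambda>tg. \<bar>fst tg\<bar>"] tg(1) tg' C'(2) by auto
    moreover have "hdist (mob 1 c (lin u t)) (g x) < \<rho>" using tg(2) tg' by (simp add: U_def)
    ultimately show ?thesis using g by blast
  qed
  thus ?thesis by blast
qed

lemma real_aux:
  fixes a b :: real
  assumes "0 \<le> a" "0 < b" "a < 1" "b < 1"
  shows "a/(1-a) < (a+b)/((1-a)*(1-b))"
proof -
  have "a/(1-a) = a*(1-b)/((1-a)*(1-b))" using assms by simp
  also have "\<dots> < (a+b)/((1-a)*(1-b))"
  proof (rule divide_strict_right_mono)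
    have "a*b \<ge> 0" using assms by simp
    moreover have "a*(1-b) = a - a*b" by (simp add: algebra_simps)
    ultimately show "a*(1-b) < a+b" using assms by linarith
    show "0 < (1-a)*(1-b)" using assms by simp
  qed
  finally show ?thesis .
qed

lemma proj_unique:
  assumes g: "geodesic_line \<kappa>" and y: "y \<in> disc"
    and ma: "\<forall>t. hdist y (\<kappa> a) \<le> hdist y (\<kappa> t)" and mb: "\<forall>t. hdist y (\<kappa> b) \<le> hdist y (\<kappa> t)"
    and ab: "a < b"
  shows False
proof -
  have gd: "\<And>t. \<kappa> t \<in> disc" using g unfolding geodesic_line_def by auto
  have gh: "\<And>s t. hdist (\<kappa> s) (\<kappa> t) = \<bar>s - t\<bar>" using g unfolding geodesic_line_def by auto
  define m where "m = (a + b)/2"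
  define e where "e = (b - a)/2"
  have ep: "e > 0" using ab by (simp add: e_def)
  note k = mob_shift0(1)[OF gd[of m]]
  define \<phi> where "\<phi> = mob 1 (-(\<kappa> m))"
  define \<gamma>' where "\<gamma>' t = \<phi> (\<kappa> (m + t))" for t
  have r: "range \<gamma>' \<subseteq> disc" using mob_props(2)[OF k gd] by (auto simp: \<gamma>'_def \<phi>_def)
  have "hdist (\<gamma>' s) (\<gamma>' t) = \<bar>s - t\<bar>" for s t
    using mob_hdist[OF k gd[of "m+s"] gd[of "m+t"]] gh[of "m+s" "m+t"] unfolding \<gamma>'_def \<phi>_def by simp
  hence g': "geodesic_line \<gamma>'" using r unfolding geodesic_line_def by blast
  have "\<gamma>' 0 = 0" unfolding \<gamma>'_def \<phi>_def by (simp add: mob_shift0(2)[OF gd[of m]])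
  from geodesic_through0[OF g' this] obtain u where u: "cmod u = 1" "\<And>t. \<gamma>' t = lin u t" by blast
  define Y where "Y = \<phi> y"
  have Yd: "Y \<in> disc" unfolding Y_def \<phi>_def by (rule mob_props(2)[OF k y])
  have hk: "hdist y (\<kappa> (m + t)) = hdist Y (lin u t)" for t
    using mob_hdist[OF k y gd[of "m+t"]] u(2)[of t] unfolding Y_def \<gamma>'_def \<phi>_def by simp
  have "m + (-e) = a" "m + e = b" "m + 0 = m" by (simp_all add: m_def e_def field_simps)
  hence ea: "hdist y (\<kappa> a) = hdist Y (lin u (-e))" and eb: "hdist y (\<kappa> b) = hdist Y (lin u e)"
    and em: "hdist y (\<kappa> m) = hdist Y (lin u 0)"
    using hk[of "-e"] hk[of e] hk[of 0] by simp_all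
  define P where "P = lin u e"
  have mP: "lin u (-e) = - P" by (simp add: P_def lin_def)
  have P0: "lin u 0 = 0" by (simp add: lin0)
  have Pd: "P \<in> disc" using lin_disc[OF u(1)] by (simp add: P_def)
  have mPd: "-P \<in> disc" using lin_disc[OF u(1), of "-e"] mP by simp
  have Pn: "(cmod P)^2 > 0" using ep u(1) by (simp add: P_def lin_norm)
  have z: "(0::complex) \<in> disc" by (simp add: disc_iff)
  have "hdist y (\<kappa> a) = hdist y (\<kappa> b)" using ma mb by (meson order_antisym)
  hence "hdist Y (-P) = hdist Y P" using ea eb mP by (simp add: P_def)
  hence "hdq Y (-P) = hdq Y P" using hd_from_hdist[OF Yd Pd] hd_from_hdist[OF Yd mPd] by simp
  moreover have D: "(1 - (cmod Y)^2) * (1 - (cmod P)^2) \<noteq> 0" "(1 - (cmod Y)^2) > 0" "(1 - (cmod P)^2) > 0"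
    using disc_sq[OF Yd] disc_sq[OF Pd] by auto
  ultimately have "(cmod (Y + P))^2 / ((1 - (cmod Y)^2) * (1 - (cmod P)^2)) = (cmod (Y - P))^2 / ((1 - (cmod Y)^2) * (1 - (cmod P)^2))"
    unfolding hdq_def by simp
  hence eqn: "(cmod (Y + P))^2 = (cmod (Y - P))^2" using D(1) by simp
  have par: "(cmod (Y - P))^2 + (cmod (Y + P))^2 = 2*(cmod Y)^2 + 2*(cmod P)^2"
    unfolding cmod_power2 by (simp add: power2_eq_square algebra_simps)
  hence YP: "(cmod (Y - P))^2 = (cmod Y)^2 + (cmod P)^2" using eqn by simp
  have "hdq Y 0 < hdq Y P"
  proof -
    have e1: "hdq Y P = ((cmod Y)^2 + (cmod P)^2)/((1-(cmod Y)^2)*(1-(cmod P)^2))"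
      unfolding hdq_def YP ..
    show ?thesis unfolding e1 hd0'
      by (rule real_aux) (use Pn disc_sq[OF Yd] disc_sq[OF Pd] in auto)
  qed
  hence "hdist Y 0 < hdist Y P" using hdist_less_iff[OF Yd z Yd Pd] by simp
  hence "hdist y (\<kappa> m) < hdist y (\<kappa> b)" using em eb P0 by (simp add: P_def)
  thus False using mb by (meson not_le)
qed

lemma proj_exists:
  assumes g: "geodesic_line \<kappa>" and y: "y \<in> disc"
  shows "\<exists>s. (\<forall>t. hdist y (\<kappa> s) \<le> hdist y (\<kappa> t)) \<and> geod_proj \<kappa> y = \<kappa> s"
proof -
  have gd: "\<And>t. \<kappa> t \<in> disc" using g unfolding geodesic_line_def by auto
  have gh: "\<And>s t. hdist (\<kappa> s) (\<kappa> t) = \<bar>s - t\<bar>" using g unfolding geodesic_line_def by auto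
  define f where "f t = hdist y (\<kappa> t)" for t
  have cf: "continuous_on UNIV f" unfolding f_def
    by (rule cont_hdist) (auto intro: continuous_on_const geodesic_continuous[OF g] simp: y gd)
  define R where "R = 2 * f 0 + 1"
  have "\<exists>s\<in>{-R..R}. \<forall>t\<in>{-R..R}. f s \<le> f t"
    by (rule continuous_attains_inf) (use continuous_on_subset[OF cf] hdist_nonneg[OF y gd] in \<open>auto simp: R_def f_def\<close>)
  then obtain s where s: "s \<in> {-R..R}" "\<And>t. t \<in> {-R..R} \<Longrightarrow> f s \<le> f t" by blast
  have f0: "f 0 \<ge> 0" using hdist_nonneg[OF y gd] by (simp add: f_def)
  have smin: "f s \<le> f t" for t
  proof (cases "t \<in> {-R..R}")
    case True thus ?thesis using s by auto
  next
    case False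
    hence "\<bar>t\<bar> > R" by auto
    have "\<bar>0 - t\<bar> \<le> hdist (\<kappa> 0) y + hdist y (\<kappa> t)" using hdist_tri[OF gd[of 0] gd[of t] y] gh[of 0 t] by simp
    hence "\<bar>t\<bar> \<le> f 0 + f t" by (simp add: f_def hdist_sym)
    moreover have "f s \<le> f 0" using s(2)[of 0] f0 by (auto simp: R_def)
    ultimately show ?thesis using \<open>\<bar>t\<bar> > R\<close> by (simp add: R_def)
  qed
  have P: "\<kappa> s \<in> range \<kappa> \<and> (\<forall>q\<in>range \<kappa>. hdist y (\<kappa> s) \<le> hdist y q)" using smin by (auto simp: f_def)
  have U: "p = \<kappa> s" if "p \<in> range \<kappa> \<and> (\<forall>q\<in>range \<kappa>. hdist y p \<le> hdist y q)" for p
  proof -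
    from that have "p \<in> range \<kappa>" by blast
    then obtain s' where s': "p = \<kappa> s'" by blast
    have m': "\<forall>t. hdist y (\<kappa> s') \<le> hdist y (\<kappa> t)" using that s' by auto
    have m: "\<forall>t. hdist y (\<kappa> s) \<le> hdist y (\<kappa> t)" using smin by (auto simp: f_def)
    have "s' = s" using proj_unique[OF g y m' m] proj_unique[OF g y m m'] by (meson linorder_neqE_linordered_idom)
    thus ?thesis using s' by simp
  qed
  have "geod_proj \<kappa> y = \<kappa> s" unfolding geod_proj_def
    by (rule the_equality[of "\<lambda>p. p \<in> range \<kappa> \<and> (\<forall>q\<in>range \<kappa>. hdist y p \<le> hdist y q)", OF P U])
  thus ?thesis using smin by (auto simp: f_def)
qed




lemma isom_mob:
  assumes "disc_isom g"
  obtains a b where "(cmod a)^2 - (cmod b)^2 = 1" "\<And>z. z \<in> disc \<Longrightarrow> g z = mob a b z"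
  using assms unfolding disc_isom_def mob_def by blast

lemma isom_disc: "disc_isom g \<Longrightarrow> z \<in> disc \<Longrightarrow> g z \<in> disc"
  by (metis isom_mob mob_props(2) zero_less_one)

lemma isom_hdist: "disc_isom g \<Longrightarrow> z \<in> disc \<Longrightarrow> w \<in> disc \<Longrightarrow> hdist (g z) (g w) = hdist z w"
  by (metis isom_mob mob_hdist zero_less_one)

lemma isom_out: "disc_isom g \<Longrightarrow> z \<notin> disc \<Longrightarrow> g z = z"
  unfolding disc_isom_def by blast

lemma isom_inj:
  assumes g: "disc_isom g"
  shows "inj g"
proof (rule injI)
  fix z w assume e: "g z = g w"
  show "z = w"
  proof (cases "z \<in> disc")
    case z: True
    show ?thesis
    proof (cases "w \<in> disc")
      case w: True
      have "hdist z w = 0" using isom_hdist[OF g z w] e hdist_self by metis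
      hence "hdq z w = 0" using hd_from_hdist[OF z w] by simp
      thus ?thesis using hd_eq_0[OF z w] by simp
    next
      case w: False
      thus ?thesis using isom_disc[OF g z] isom_out[OF g w] e by simp
    qed
  next
    case z: False
    show ?thesis
    proof (cases "w \<in> disc")
      case w: True
      thus ?thesis using isom_disc[OF g w] isom_out[OF g z] e z by metis
    next
      case w: False
      thus ?thesis using isom_out[OF g w] isom_out[OF g z] e by simp
    qed
  qed
qed

theorem lemma3p3:
  fixes G :: "(complex \<Rightarrow> complex) set" and \<tau> :: "complex set"
    and \<kappa> :: "real \<Rightarrow> complex" and x :: complex and \<rho> :: real
  assumes "cocompact_fuchsian G"
    and "fundamental_polygon G \<tau>"
    and "side_pairings_not_self_inverse G \<tau>"
    and "geodesic_line \<kappa>"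
    and "dense_geodesic G \<kappa>"
    and "x \<in> interior \<tau>"
    and "\<rho> > 0"
    and "\<forall>\<gamma>. geodesic_line \<gamma> \<longrightarrow> (\<exists>t. \<exists>g\<in>G. hdist (\<gamma> t) (g x) < \<rho>)"
  shows "\<exists>\<epsilon>>0. rel_dense \<epsilon> (S_plus G \<kappa> \<rho> x)"
proof -
  note kap = assms(4) and hyp = assms(8)
  have fG: "fuchsian_group G" using assms(1) by (simp add: cocompact_fuchsian_def)
  have isoG: "\<And>g. g \<in> G \<Longrightarrow> disc_isom g" using fG by (simp add: fuchsian_group_def)
  have idG: "id \<in> G" using fG by (simp add: fuchsian_group_def)
  have compG: "\<And>g h. g \<in> G \<Longrightarrow> h \<in> G \<Longrightarrow> g \<circ> h \<in> G" using fG by (simp add: fuchsian_group_def)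
  have invG: "\<And>g. g \<in> G \<Longrightarrow> inv g \<in> G" using fG by (simp add: fuchsian_group_def)
  obtain K where K: "compact K" "K \<subseteq> disc" "(\<Union>g\<in>G. g ` K) = disc"
    using assms(1) by (auto simp: cocompact_fuchsian_def)
  have "(\<Union>g\<in>G. g ` \<tau>) = disc" using assms(2) by (simp add: fundamental_polygon_def)
  hence "id ` \<tau> \<subseteq> disc" using idG by blast
  hence "\<tau> \<subseteq> disc" by simp
  hence xd: "x \<in> disc" using assms(6) interior_subset by blast
  have Gx: "\<forall>g\<in>G. g x \<in> disc" using isoG isom_disc xd by blast
  have kd: "\<And>t. \<kappa> t \<in> disc" using kap unfolding geodesic_line_def by auto
  have kh: "\<And>s t. hdist (\<kappa> s) (\<kappa> t) = \<bar>s - t\<bar>" using kap unfolding geodesic_line_def by auto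
  obtain T where T: "\<And>c u. c \<in> K \<Longrightarrow> cmod u = 1 \<Longrightarrow> (\<exists>t. \<bar>t\<bar> \<le> T \<and> (\<exists>g\<in>G. hdist (mob 1 c (lin u t)) (g x) < \<rho>))"
    using uniform_T[OF K(1,2) hyp Gx] by blast
  define \<epsilon> where "\<epsilon> = \<bar>T\<bar> + 2 * \<rho>"
  have "\<exists>s'\<in>S_plus G \<kappa> \<rho> x. \<bar>s - s'\<bar> \<le> \<epsilon>" for s
  proof -
    have "\<kappa> s \<in> (\<Union>g\<in>G. g ` K)" using K(3) kd by blast
    then obtain h0 k where h0: "h0 \<in> G" "k \<in> K" "\<kappa> s = h0 k" by blast
    define g' where "g' = inv h0"
    have g'G: "g' \<in> G" using invG[OF h0(1)] by (simp add: g'_def)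
    have ih0: "disc_isom h0" and ig': "disc_isom g'" using isoG h0(1) g'G by auto
    have gh: "\<And>z. g' (h0 z) = z" unfolding g'_def using isom_inj[OF ih0] by simp
    define \<gamma> where "\<gamma> t = g' (\<kappa> (s + t))" for t
    have "range \<gamma> \<subseteq> disc" using isom_disc[OF ig' kd] by (auto simp: \<gamma>_def)
    moreover have "hdist (\<gamma> a) (\<gamma> b) = \<bar>a - b\<bar>" for a b
      using isom_hdist[OF ig' kd kd] kh[of "s+a" "s+b"] by (simp add: \<gamma>_def)
    ultimately have g: "geodesic_line \<gamma>" unfolding geodesic_line_def by blast
    have g0: "\<gamma> 0 = k" by (simp add: \<gamma>_def h0(3) gh)
    obtain u where u: "cmod u = 1" "\<And>t. \<gamma> t = mob 1 (\<gamma> 0) (lin u t)" using geodesic_char[OF g] by blast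
    obtain t h where th: "\<bar>t\<bar> \<le> T" "h \<in> G" "hdist (mob 1 k (lin u t)) (h x) < \<rho>"
      using T[OF h0(2) u(1)] by blast
    have l1: "hdist (\<gamma> t) (h x) < \<rho>" using th(3) u(2)[of t] g0 by simp
    define y where "y = (h0 \<circ> h) x"
    have yG: "h0 \<circ> h \<in> G" using compG[OF h0(1) th(2)] .
    have yd: "y \<in> disc" using bspec[OF Gx yG] by (simp add: y_def)
    have hxd: "h x \<in> disc" using Gx th(2) by blast
    have "hdist (\<kappa> (s + t)) y = hdist (g' (\<kappa> (s + t))) (g' y)"
      using isom_hdist[OF ig' kd yd] by simp
    also have "g' y = h x" by (simp add: y_def gh)
    finally have "hdist (\<kappa> (s + t)) y = hdist (\<gamma> t) (h x)" by (simp add: \<gamma>_def)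
    hence dy: "hdist y (\<kappa> (s + t)) < \<rho>" using l1 by (simp add: hdist_sym)
    have "hdist_set y (range \<kappa>) \<le> hdist y (\<kappa> (s + t))"
      unfolding hdist_set_def
    proof (rule cINF_lower)
      show "bdd_below ((\<lambda>a. hdist y a) ` range \<kappa>)"
        using hdist_nonneg[OF yd kd] by (auto intro!: bdd_belowI[of _ 0])
    qed simp
    hence "y \<in> nbhd_plus \<kappa> \<rho>" using dy yd by (simp add: nbhd_plus_def)
    moreover have "y \<in> gorbit G x" unfolding gorbit_def y_def using yG by (rule image_eqI[rotated]) simp
    ultimately have yS: "y \<in> gorbit G x \<inter> nbhd_plus \<kappa> \<rho>" by blast
    obtain s' where s': "\<forall>t. hdist y (\<kappa> s') \<le> hdist y (\<kappa> t)" "geod_proj \<kappa> y = \<kappa> s'"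
      using proj_exists[OF kap yd] by blast
    have "s' \<in> S_plus G \<kappa> \<rho> x" unfolding S_plus_def using yS s'(2) by (metis image_eqI vimageI)
    moreover have "\<bar>s' - (s + t)\<bar> \<le> 2 * \<rho>"
    proof -
      have "\<bar>s' - (s + t)\<bar> = hdist (\<kappa> s') (\<kappa> (s + t))" using kh by simp
      also have "\<dots> \<le> hdist (\<kappa> s') y + hdist y (\<kappa> (s + t))" by (rule hdist_tri[OF kd kd yd])
      also have "\<dots> \<le> 2 * \<rho>" using s'(1)[rule_format, of "s + t"] dy by (simp add: hdist_sym)
      finally show ?thesis .
    qed
    ultimately show ?thesis using th(1) unfolding \<epsilon>_def by (intro bexI[of _ s']) auto
  qed
  moreover have "\<epsilon> > 0" using assms(7) by (simp add: \<epsilon>_def)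
  ultimately show ?thesis unfolding rel_dense_def by blast
qed


end
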